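(* Let $a,b,q$ be parameters (complex numbers or indeterminates) such that none of the denominators below vanishes, and put $c(n,a,b,q)=\frac{(b;q)_n}{(a;q)_n}$. Define, for $n\ge 0$, $$T(2n)=\frac{q^n(1-q^nb)(1-q^{n-1}a)}{(1-q^{2n-1}a)(1-q^{2n}a)},\qquad T(2n+1)=\frac{q^n(1-q^{n+1})(b-q^na)}{(1-q^{2n+1}a)(1-q^{2n}a)},$$ and define numbers $A(n,k)$ for integers $n\ge 0$ and all integers $k$ by $$A(2n,2k)=\begin{bmatrix} n\\ k\end{bmatrix} c(n-k,q^{2k}a,q^kb,q),\qquad A(2n+1,2k+1)=\begin{bmatrix} n\\ k\end{bmatrix} c(n-k,q^{2k+1}a,q^{k+1}b,q),$$ and $A(n,k)=0$ whenever $n-k$ is odd. Then $$A(0,k)=[k=0],\qquad A(n,0)=T(0)A(n-1,1)\ (n\ge1),\qquad A(n,k)=A(n-1,k-1)+T(k)A(n-1,k+1)\ (n\ge1,\ k\ge1).$$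
   Context: Notation: $(x;q)_n=\prod_{j=0}^{n-1}(1-q^jx)$; $\begin{bmatrix} n\\ k\end{bmatrix}=\frac{(q;q)_n}{(q;q)_k(q;q)_{n-k}}$ for $0\le k\le n$ and $\begin{bmatrix} n\\ k\end{bmatrix}=0$ for $k<0$ or $k>n$. $[P]$ denotes $1$ if $P$ is true and $0$ otherwise. (At $n=0$ the factor $1-q^{-1}a$ cancels, so $T(0)=\frac{1-b}{1-a}$.) *)

theory Defs
  imports Complex_Main
begin

definition qpoch :: "complex \<Rightarrow> complex \<Rightarrow> nat \<Rightarrow> complex" where
  "qpoch x q n = (\<Prod>j<n. (1 - q ^ j * x))"

definition qbinom :: "complex \<Rightarrow> nat \<Rightarrow> int \<Rightarrow> complex" where
  "qbinom q n k = (if 0 \<le> k \<and> k \<le> int n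
      then qpoch q q n / (qpoch q q (nat k) * qpoch q q (n - nat k)) else 0)"

definition cfun :: "nat \<Rightarrow> complex \<Rightarrow> complex \<Rightarrow> complex \<Rightarrow> complex" where
  "cfun n a b q = qpoch b q n / qpoch a q n"

text \<open>T(k); T(0) is the cancelled value (1-b)/(1-a).\<close>
definition Tfun :: "complex \<Rightarrow> complex \<Rightarrow> complex \<Rightarrow> nat \<Rightarrow> complex" where
  "Tfun a b q k =
    (if k = 0 then (1 - b) / (1 - a)
     else if even k then
       (let n = k div 2 in
        q ^ n * (1 - q ^ n * b) * (1 - q ^ (n - 1) * a)
          / ((1 - q ^ (2 * n - 1) * a) * (1 - q ^ (2 * n) * a)))
     else
       (let n = k div 2 in
        q ^ n * (1 - q ^ (n + 1)) * (b - q ^ n * a)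
          / ((1 - q ^ (2 * n + 1) * a) * (1 - q ^ (2 * n) * a))))"

definition Afun :: "complex \<Rightarrow> complex \<Rightarrow> complex \<Rightarrow> nat \<Rightarrow> int \<Rightarrow> complex" where
  "Afun a b q n k =
    (if odd (int n - k) then 0
     else if even n then
       (let m = n div 2; j = k div 2 in
        if 0 \<le> j \<and> j \<le> int m then
          qbinom q m j * cfun (m - nat j) (q ^ (2 * nat j) * a) (q ^ nat j * b) q
        else 0)
     else
       (let m = n div 2; j = k div 2 in
        if 0 \<le> j \<and> j \<le> int m then
          qbinom q m j * cfun (m - nat j) (q ^ (2 * nat j + 1) * a) (q ^ (nat j + 1) * b) q
        else 0))"

end

theory Submission imports Defs begin

lemma qpoch_Suc: "qpoch x q (Suc n) = qpoch x q n * (1 - q^n * x)"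
  by (simp add: qpoch_def)

lemma qpoch_Suc2: "qpoch x q (Suc n) = (1 - x) * qpoch (q*x) q n"
  unfolding qpoch_def by (subst prod.lessThan_Suc_shift) (simp add: ac_simps)

lemma qpoch_0[simp]: "qpoch x q 0 = 1" by (simp add: qpoch_def)

lemma qpoch_nz: "(\<And>i. i < n \<Longrightarrow> 1 - q^i * x \<noteq> 0) \<Longrightarrow> qpoch x q n \<noteq> 0"
  unfolding qpoch_def by (simp add: prod_zero_iff)

lemma A_ev: "Afun a b q (2*m) (2*int j) = (if j \<le> m then qbinom q m (int j) * cfun (m-j) (q^(2*j)*a) (q^j*b) q else 0)"
  unfolding Afun_def Let_def by simp

lemma A_od: "Afun a b q (2*m+1) (2*int j+1) = (if j \<le> m then qbinom q m (int j) * cfun (m-j) (q^(2*j+1)*a) (q^(j+1)*b) q else 0)"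
  unfolding Afun_def Let_def by simp

lemma A_par: "odd (int n - k) \<Longrightarrow> Afun a b q n k = 0"
  unfolding Afun_def by simp

lemma qbinom_nat: "j \<le> m \<Longrightarrow> qbinom q m (int j) = qpoch q q m/(qpoch q q j * qpoch q q (m-j))"
  unfolding qbinom_def by simp

lemma T_even: "Tfun a b q (2*Suc j) = q^(Suc j) * (1 - q^(Suc j)*b) * (1 - q^j*a)/((1 - q^(2*j+1)*a)*(1-q^(2*Suc j)*a))"
  unfolding Tfun_def Let_def by simp

lemma T_odd: "Tfun a b q (2*j+1) = q^j*(1-q^(j+1))*(b-q^j*a)/((1-q^(2*j+1)*a)*(1-q^(2*j)*a))"
  unfolding Tfun_def Let_def by simp

lemma alg_even0:
  fixes q u v a B Y0 R P Qm Qj Qd D1 D2 D3 D4 D5 D6 :: complex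
  assumes nz: "D1 \<noteq> 0" "D2 \<noteq> 0" "D3 \<noteq> 0" "Qm \<noteq> 0" "Qj \<noteq> 0" "Qd \<noteq> 0" "R \<noteq> 0"
    "D4 \<noteq> 0" "D5 \<noteq> 0" "D6 \<noteq> 0"
   and e: "D1 = 1-q*u" "D2 = 1-q*v" "D3 = 1-q^2*u*v" "D4 = 1 - q*u^2*a" "D5 = 1 - q*(q*u^2*a)" "D6 = 1 - v*(q*(q*u^2*a))"
  shows "Qm*D3/(Qj*D1*(Qd*D2)) * ((1-B)*Y0/(R*D6))
   = Qm/(Qj*(Qd*D2)) * ((1-B)*Y0/(D4*R))
   + q*u*(1-B)*(1-u*a)/(D4*D5) * (Qm/(Qj*D1*Qd)) * (Y0/(R*D6/D5))"
proof -
  have "Qm*D3/(Qj*D1*(Qd*D2)) * ((1-B)*Y0/(R*D6)) - (Qm/(Qj*(Qd*D2)) * ((1-B)*Y0/(D4*R))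
   + q*u*(1-B)*(1-u*a)/(D4*D5) * (Qm/(Qj*D1*Qd)) * (Y0/(R*D6/D5)))
   = Qm*(1-B)*Y0 * (D3*D4 - D1*D6 - q*u*(1-u*a)*D2) / (Qj*D1*Qd*D2*R*D6*D4)"
    using nz by (simp add: field_simps)
  also have "D3*D4 - D1*D6 - q*u*(1-u*a)*D2 = 0" unfolding e by algebra
  finally show ?thesis by simp
qed

lemma alg_odd0:
  fixes q u v a b Y0 Z P Qm Qj Qd D1 D2 D4 D5 D6 :: complex
  assumes nz: "D1 \<noteq> 0" "D2 \<noteq> 0" "Qm \<noteq> 0" "Qj \<noteq> 0" "Qd \<noteq> 0" "Z \<noteq> 0"
    "D4 \<noteq> 0" "D5 \<noteq> 0" "D6 \<noteq> 0"
   and e: "D1 = 1-q*u" "D2 = 1-q*v" "D4 = 1 - u^2*a" "D5 = 1 - q*(u^2*a)" "D6 = 1 - v*(q*(u^2*a))"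
  shows "Qm/(Qj*(Qd*D2)) * (Y0*(1-v*(q*(u*b)))/(Z*D6))
   = Qm/(Qj*(Qd*D2)) * ((1-u*b)*Y0/(D4*Z))
   + u*D1*(b-u*a)/(D5*D4) * (Qm/(Qj*D1*Qd)) * (Y0/(Z*D6/D5))"
proof -
  have "Qm/(Qj*(Qd*D2)) * (Y0*(1-v*(q*(u*b)))/(Z*D6)) - (Qm/(Qj*(Qd*D2)) * ((1-u*b)*Y0/(D4*Z))
   + u*D1*(b-u*a)/(D5*D4) * (Qm/(Qj*D1*Qd)) * (Y0/(Z*D6/D5)))
   = Qm*Y0*((1-v*(q*(u*b)))*D4 - (1-u*b)*D6 - u*(b-u*a)*D2)/(Qj*Qd*D2*Z*D6*D4)"
    using nz by (simp add: field_simps)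
  also have "(1-v*(q*(u*b)))*D4 - (1-u*b)*D6 - u*(b-u*a)*D2 = 0" unfolding e by algebra
  finally show ?thesis by simp
qed

lemma even_case:
  fixes a b q :: complex
  assumes nza: "\<And>m::nat. 1 - q ^ m * a \<noteq> 0"
    and nzq: "\<And>m::nat. m \<ge> 1 \<Longrightarrow> 1 - q ^ m \<noteq> 0"
  shows "Afun a b q (2*Suc (j' + Suc d')) (2*int (Suc j')) =
     Afun a b q (2*(j' + Suc d')+1) (2*int j'+1) + Tfun a b q (2*Suc j') * Afun a b q (2*(j' + Suc d')+1) (2*int (Suc j')+1)"
proof -
  define u where "u = q^j'"
  define v where "v = q^d'"
  define x0 where "x0 = q*u^2*a"
  define B where "B = q^(Suc j')*b"
  define Y0 where "Y0 = qpoch (q*B) q d'"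
  define R where "R = qpoch (q*x0) q d'"
  define Qm where "Qm = qpoch q q (j' + Suc d')"
  define Qj where "Qj = qpoch q q j'"
  define Qd where "Qd = qpoch q q d'"
  define D1 where "D1 = 1-q*u"
  define D2 where "D2 = 1-q*v"
  define D3 where "D3 = 1-q^2*u*v"
  define D4 where "D4 = 1 - q*u^2*a"
  define D5 where "D5 = 1 - q*(q*u^2*a)"
  define D6 where "D6 = 1 - v*(q*(q*u^2*a))"
  have px0: "q^(2*j'+1)*a = x0" unfolding x0_def u_def by (simp add: power_mult power_add power2_eq_square ac_simps)
  have px1: "q^(2*Suc j')*a = q*x0" unfolding x0_def u_def by (simp add: power_mult power_add power2_eq_square ac_simps)
  have px2: "q^(2*Suc j'+1)*a = q*(q*x0)" unfolding x0_def u_def by (simp add: power_mult power_add power2_eq_square ac_simps)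
  have pB: "q^(Suc j'+1)*b = q*B" unfolding B_def by simp
  have nzx: "\<And>i n. 1 - q^i * (q^n*a) \<noteq> 0" by (metis nza power_add mult.assoc)
  have nzD4: "D4 \<noteq> 0" using nza[of "2*j'+1"] unfolding px0 unfolding D4_def x0_def .
  have nzD5: "D5 \<noteq> 0" using nza[of "2*Suc j'"] unfolding px1 unfolding D5_def x0_def .
  have u2: "u^2 = q^(2*j')" unfolding u_def by (simp add: power_mult mult.commute)
  have nzD6: "D6 \<noteq> 0" using nza[of "d' + 2*Suc j'"] unfolding D6_def v_def u2
    by (simp add: power_add ac_simps)
  have nzD1: "D1 \<noteq> 0" using nzq[of "Suc j'"] unfolding D1_def u_def by simp
  have nzD2: "D2 \<noteq> 0" using nzq[of "Suc d'"] unfolding D2_def v_def by simp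
  have nzD3: "D3 \<noteq> 0" using nzq[of "Suc (Suc (j'+d'))"] unfolding D3_def v_def u_def
    by (simp add: power_add power2_eq_square ac_simps)
  have nzQ: "\<And>n. qpoch q q n \<noteq> 0"
    by (rule qpoch_nz) (metis nzq power_Suc2 le_add1 plus_1_eq_Suc mult.commute power_Suc)
  have nzR: "R \<noteq> 0" unfolding R_def by (rule qpoch_nz) (use nzx px1 in \<open>metis\<close>)
  have Rrel: "(1 - q*x0) * qpoch (q*(q*x0)) q d' = R * (1 - v*(q*x0))"
    using qpoch_Suc[of "q*x0" q d'] qpoch_Suc2[of "q*x0" q d'] unfolding R_def v_def by simp
  have P: "qpoch (q*(q*x0)) q d' = R*D6/D5"
    using Rrel nzD5 unfolding D5_def D6_def x0_def by (simp add: field_simps)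
  have L: "Afun a b q (2*Suc (j' + Suc d')) (2*int (Suc j')) = Qm*D3/(Qj*D1*(Qd*D2)) * ((1-B)*Y0/(R*D6))"
  proof -
    have "Afun a b q (2*Suc (j' + Suc d')) (2*int (Suc j')) = qbinom q (Suc (j' + Suc d')) (int (Suc j')) * cfun (Suc d') (q*x0) B q"
      unfolding A_ev px1 B_def by simp
    also have "qbinom q (Suc (j' + Suc d')) (int (Suc j')) = Qm*D3/(Qj*D1*(Qd*D2))"
      apply (subst qbinom_nat, simp) using nzQ
      by (simp add: qpoch_Suc Qm_def Qj_def Qd_def D1_def D2_def D3_def u_def v_def power_add power2_eq_square ac_simps)
    also have "cfun (Suc d') (q*x0) B q = (1-B)*Y0/(R*D6)"
      unfolding cfun_def qpoch_Suc2[of B] Y0_def R_def D6_def v_def x0_def by (simp add: qpoch_Suc)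
    finally show ?thesis .
  qed
  have R1: "Afun a b q (2*(j' + Suc d')+1) (2*int j'+1) = Qm/(Qj*(Qd*D2)) * ((1-B)*Y0/(D4*R))"
  proof -
    have "Afun a b q (2*(j' + Suc d')+1) (2*int j'+1) = qbinom q (j' + Suc d') (int j') * cfun (Suc d') x0 B q"
      unfolding A_od px0 B_def by simp
    also have "qbinom q (j' + Suc d') (int j') = Qm/(Qj*(Qd*D2))"
      apply (subst qbinom_nat, simp) using nzQ
      by (simp add: qpoch_Suc Qm_def Qj_def Qd_def D2_def v_def)
    also have "cfun (Suc d') x0 B q = (1-B)*Y0/(D4*R)"
      unfolding cfun_def qpoch_Suc2 Y0_def R_def D4_def x0_def by simp
    finally show ?thesis .
  qed
  have R2: "Tfun a b q (2*Suc j') = q*u*(1-B)*(1-u*a)/(D4*D5)"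
    unfolding T_even px0 px1 B_def D4_def D5_def u_def x0_def by simp
  have R3: "Afun a b q (2*(j' + Suc d')+1) (2*int (Suc j')+1) = Qm/(Qj*D1*Qd) * (Y0/(R*D6/D5))"
  proof -
    have "Afun a b q (2*(j' + Suc d')+1) (2*int (Suc j')+1) = qbinom q (j' + Suc d') (int (Suc j')) * cfun d' (q*(q*x0)) (q*B) q"
      unfolding A_od px2 pB by simp
    also have "qbinom q (j' + Suc d') (int (Suc j')) = Qm/(Qj*D1*Qd)"
      apply (subst qbinom_nat, simp) using nzQ
      by (simp add: qpoch_Suc Qm_def Qj_def Qd_def D1_def u_def)
    also have "cfun d' (q*(q*x0)) (q*B) q = Y0/(R*D6/D5)"
      unfolding cfun_def P Y0_def by simp
    finally show ?thesis .
  qed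
  have "Qm \<noteq> 0" "Qj \<noteq> 0" "Qd \<noteq> 0" using nzQ unfolding Qm_def Qj_def Qd_def by auto
  note A = alg_even0[OF nzD1 nzD2 nzD3 this nzR nzD4 nzD5 nzD6 D1_def D2_def D3_def D4_def D5_def D6_def]
  show ?thesis unfolding L R1 R2 R3 using A by (simp only: mult.assoc)
qed

lemma odd_case:
  fixes a b q :: complex
  assumes nza: "\<And>m::nat. 1 - q ^ m * a \<noteq> 0"
    and nzq: "\<And>m::nat. m \<ge> 1 \<Longrightarrow> 1 - q ^ m \<noteq> 0"
  shows "Afun a b q (2*(j + Suc d')+1) (2*int j+1) =
     Afun a b q (2*(j + Suc d')) (2*int j) + Tfun a b q (2*j+1) * Afun a b q (2*(j + Suc d')) (2*int (Suc j))"
proof -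
  define u where "u = q^j"
  define v where "v = q^d'"
  define al where "al = u^2*a"
  define B where "B = u*b"
  define Y0 where "Y0 = qpoch (q*B) q d'"
  define Z where "Z = qpoch (q*al) q d'"
  define Qm where "Qm = qpoch q q (j + Suc d')"
  define Qj where "Qj = qpoch q q j"
  define Qd where "Qd = qpoch q q d'"
  define D1 where "D1 = 1-q*u"
  define D2 where "D2 = 1-q*v"
  define D4 where "D4 = 1 - u^2*a"
  define D5 where "D5 = 1 - q*(u^2*a)"
  define D6 where "D6 = 1 - v*(q*(u^2*a))"
  have u2: "u^2 = q^(2*j)" unfolding u_def by (simp add: power_mult mult.commute)
  have px0: "q^(2*j)*a = al" unfolding al_def u2 ..
  have px1: "q^(2*j+1)*a = q*al" unfolding al_def u2 by simp
  have px2: "q^(2*Suc j)*a = q*(q*al)" unfolding al_def u2 by simp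
  have pB0: "q^j*b = B" unfolding B_def u_def ..
  have pB: "q^(j+1)*b = q*B" unfolding B_def u_def by simp
  have pB': "q^(Suc j)*b = q*B" unfolding B_def u_def by simp
  have nzx: "\<And>i n. 1 - q^i * (q^n*a) \<noteq> 0" by (metis nza power_add mult.assoc)
  have nzD4: "D4 \<noteq> 0" using nza[of "2*j"] unfolding px0 unfolding D4_def al_def .
  have nzD5: "D5 \<noteq> 0" using nza[of "2*j+1"] unfolding px1 unfolding D5_def al_def .
  have nzD6: "D6 \<noteq> 0" using nza[of "d' + (2*j+1)"] unfolding D6_def v_def u2
    by (simp add: power_add ac_simps)
  have nzD1: "D1 \<noteq> 0" using nzq[of "Suc j"] unfolding D1_def u_def by simp
  have nzD2: "D2 \<noteq> 0" using nzq[of "Suc d'"] unfolding D2_def v_def by simp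
  have nzQ: "\<And>n. qpoch q q n \<noteq> 0"
    by (rule qpoch_nz) (metis nzq power_Suc2 le_add1 plus_1_eq_Suc mult.commute power_Suc)
  have nzZ: "Z \<noteq> 0" unfolding Z_def by (rule qpoch_nz) (use nzx px1 in \<open>metis\<close>)
  have Zrel: "(1 - q*al) * qpoch (q*(q*al)) q d' = Z * (1 - v*(q*al))"
    using qpoch_Suc[of "q*al" q d'] qpoch_Suc2[of "q*al" q d'] unfolding Z_def v_def by simp
  have P: "qpoch (q*(q*al)) q d' = Z*D6/D5"
    using Zrel nzD5 unfolding D5_def D6_def al_def by (simp add: field_simps)
  have Qb: "qbinom q (j + Suc d') (int j) = Qm/(Qj*(Qd*D2))"
      apply (subst qbinom_nat, simp) using nzQ
      by (simp add: qpoch_Suc Qm_def Qj_def Qd_def D2_def v_def)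
  have L: "Afun a b q (2*(j + Suc d')+1) (2*int j+1) = Qm/(Qj*(Qd*D2)) * (Y0*(1-v*(q*(u*b)))/(Z*D6))"
  proof -
    have "Afun a b q (2*(j + Suc d')+1) (2*int j+1) = qbinom q (j + Suc d') (int j) * cfun (Suc d') (q*al) (q*B) q"
      unfolding A_od px1 pB by simp
    also have "cfun (Suc d') (q*al) (q*B) q = Y0*(1-v*(q*(u*b)))/(Z*D6)"
      unfolding cfun_def qpoch_Suc Y0_def Z_def D6_def v_def al_def B_def ..
    finally show ?thesis unfolding Qb .
  qed
  have R1: "Afun a b q (2*(j + Suc d')) (2*int j) = Qm/(Qj*(Qd*D2)) * ((1-u*b)*Y0/(D4*Z))"
  proof -
    have "Afun a b q (2*(j + Suc d')) (2*int j) = qbinom q (j + Suc d') (int j) * cfun (Suc d') al B q"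
      unfolding A_ev px0 pB0 by simp
    also have "cfun (Suc d') al B q = (1-u*b)*Y0/(D4*Z)"
      unfolding cfun_def qpoch_Suc2 Y0_def Z_def D4_def al_def B_def ..
    finally show ?thesis unfolding Qb .
  qed
  have R2: "Tfun a b q (2*j+1) = u*D1*(b-u*a)/(D5*D4)"
    unfolding T_odd px0 px1 D1_def D4_def D5_def al_def u_def by (simp add: mult.commute)
  have R3: "Afun a b q (2*(j + Suc d')) (2*int (Suc j)) = Qm/(Qj*D1*Qd) * (Y0/(Z*D6/D5))"
  proof -
    have "Afun a b q (2*(j + Suc d')) (2*int (Suc j)) = qbinom q (j + Suc d') (int (Suc j)) * cfun d' (q*(q*al)) (q*B) q"
      unfolding A_ev px2 pB' by simp
    also have "qbinom q (j + Suc d') (int (Suc j)) = Qm/(Qj*D1*Qd)"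
      apply (subst qbinom_nat, simp) using nzQ
      by (simp add: qpoch_Suc Qm_def Qj_def Qd_def D1_def u_def)
    also have "cfun d' (q*(q*al)) (q*B) q = Y0/(Z*D6/D5)"
      unfolding cfun_def P Y0_def by simp
    finally show ?thesis .
  qed
  have "Qm \<noteq> 0" "Qj \<noteq> 0" "Qd \<noteq> 0" using nzQ unfolding Qm_def Qj_def Qd_def by auto
  note A = alg_odd0[OF nzD1 nzD2 this nzZ nzD4 nzD5 nzD6 D1_def D2_def D4_def D5_def D6_def]
  show ?thesis unfolding L R1 R2 R3 using A by (simp only: mult.assoc)
qed

lemma nzQ_gen:
  assumes nzq: "\<And>m::nat. m \<ge> 1 \<Longrightarrow> 1 - q ^ m \<noteq> 0"
  shows "qpoch q q n \<noteq> 0"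
    by (rule qpoch_nz) (metis nzq power_Suc2 le_add1 plus_1_eq_Suc mult.commute power_Suc)

lemma qbinom_diag: "qpoch q q m \<noteq> 0 \<Longrightarrow> qbinom q m (int m) = 1"
  by (simp add: qbinom_def)

lemma claim1: "Afun a b q 0 k = (if k = 0 then 1 else 0)"
proof (cases "odd k")
  case True then show ?thesis using A_par[of 0 k] by auto
next
  case False
  then obtain i where k: "k = 2*i" by (metis evenE)
  show ?thesis
  proof (cases "i = 0")
    case True then show ?thesis using k A_ev[of a b q 0 0] by (simp add: qbinom_def cfun_def)
  next
    case False then show ?thesis using k unfolding Afun_def Let_def by auto
  qed
qed

lemma claim2:
  assumes nza: "\<And>m::nat. 1 - q ^ m * a \<noteq> 0"
    and nzq: "\<And>m::nat. m \<ge> 1 \<Longrightarrow> 1 - q ^ m \<noteq> 0"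
    and n: "n \<ge> 1"
  shows "Afun a b q n 0 = Tfun a b q 0 * Afun a b q (n - 1) 1"
proof (cases "even n")
  case True
  then obtain m0 where m0: "n = 2*m0" by blast
  define m where "m = m0 - 1"
  have m: "n = 2*Suc m" using m0 n by (simp add: m_def)
  have e1: "Afun a b q n 0 = cfun (Suc m) a b q"
    using A_ev[of a b q "Suc m" 0] nzQ_gen[OF nzq] m by (simp add: qbinom_def)
  have e2: "Afun a b q (n-1) 1 = cfun m (q*a) (q*b) q"
    using A_od[of a b q m 0] nzQ_gen[OF nzq] m by (simp add: qbinom_def)
  have "1 - a \<noteq> 0" using nza[of 0] by simp
  then show ?thesis unfolding e1 e2 cfun_def Tfun_def qpoch_Suc2 by simp
next
  case False
  then show ?thesis using A_par[of n 0] A_par[of "n-1" 1] n by auto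
qed

lemma claim3:
  assumes nza: "\<And>m::nat. 1 - q ^ m * a \<noteq> 0"
    and nzq: "\<And>m::nat. m \<ge> 1 \<Longrightarrow> 1 - q ^ m \<noteq> 0"
    and n: "n \<ge> 1" and k: "k \<ge> 1"
  shows "Afun a b q n k = Afun a b q (n - 1) (k - 1) + Tfun a b q (nat k) * Afun a b q (n - 1) (k + 1)"
proof (cases "odd (int n - k)")
  case True
  have e1: "int (n-1) - (k-1) = int n - k" and e2: "int (n-1) - (k+1) = (int n - k) - 2" using n by (simp_all add: of_nat_diff)
  have "odd (int (n-1) - (k-1))" "odd (int (n-1) - (k+1))" using True unfolding e1 e2 by simp_all
  then show ?thesis using A_par True by simp
next
  case False
  show ?thesis
  proof (cases "even n")
    case True
    then obtain m where m: "n = 2*m" by blast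
    with n have m1: "m \<ge> 1" by simp
    from False True have "even k" by simp
    then obtain i where i: "k = 2*i" by blast
    with k have "i \<ge> 1" by simp
    define j' where "j' = nat (i-1)"
    have j': "i = int (Suc j')" using \<open>i \<ge> 1\<close> by (simp add: j'_def)
    have nk: "nat k = 2*Suc j'" using i j' by simp
    have km: "k - 1 = 2*int j' + 1" "k + 1 = 2*int (Suc j') + 1" "k = 2*int (Suc j')" using i j' by simp_all
    define m' where "m' = m - 1"
    have m': "m = Suc m'" using m1 by (simp add: m'_def)
    have nm: "n - 1 = 2*m' + 1" "n = 2*Suc m'" using m m' by simp_all
    show ?thesis
    proof (cases "Suc j' < m")
      case True
      define d' where "d' = m' - Suc j'"
      have d': "m' = j' + Suc d'" using m' True by (simp add: d'_def)
      show ?thesis unfolding nk unfolding km(1,2) nm(1) unfolding km(3) nm(2) d' by (rule even_case[OF nza nzq])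
    next
      case False
      show ?thesis
      proof (cases "Suc j' = m")
        case True
        then have jm: "j' = m'" using m' by simp
        show ?thesis unfolding nk unfolding km(1,2) nm(1) unfolding km(3) nm(2) jm apply (simp only: A_ev A_od qbinom_diag[OF nzQ_gen[OF nzq]]) by (simp add: cfun_def)
      next
        case False
        then show ?thesis unfolding nk unfolding km(1,2) nm(1) unfolding km(3) nm(2) using m' \<open>\<not> Suc j' < m\<close> apply (simp only: A_ev A_od) by simp
      qed
    qed
  next
    case odd: False
    then obtain m where m: "n = 2*m+1" by (metis oddE)
    from False odd have "odd k" by simp
    then obtain i where i: "k = 2*i+1" by (metis oddE)
    with k have "i \<ge> 0" by simp
    then obtain j where j: "i = int j" by (metis nonneg_int_cases)
    have nk: "nat k = 2*j+1" using i j by (simp add: nat_add_distrib nat_mult_distrib)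
    have km: "k - 1 = 2*int j" "k + 1 = 2*int (Suc j)" "k = 2*int j + 1" using i j by simp_all
    have nm: "n - 1 = 2*m" using m by simp
    show ?thesis
    proof (cases "j < m")
      case True
      define d' where "d' = m - Suc j"
      have d': "m = j + Suc d'" using True by (simp add: d'_def)
      show ?thesis unfolding nk unfolding km(1,2) nm unfolding km(3) m d' by (rule odd_case[OF nza nzq])
    next
      case False
      show ?thesis
      proof (cases "j = m")
        case True
        show ?thesis unfolding nk unfolding km(1,2) nm unfolding km(3) m True apply (simp only: A_ev A_od qbinom_diag[OF nzQ_gen[OF nzq]]) by (simp add: cfun_def)
      next
        case False
        then show ?thesis unfolding nk unfolding km(1,2) nm unfolding km(3) m using \<open>\<not> j < m\<close> apply (simp only: A_ev A_od) by simp
      qed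
    qed
  qed
qed

theorem theorem1:
  fixes a b q :: complex
  assumes nza: "\<And>m::nat. 1 - q ^ m * a \<noteq> 0"
    and nzq: "\<And>m::nat. m \<ge> 1 \<Longrightarrow> 1 - q ^ m \<noteq> 0"
  shows "(\<forall>k::int. Afun a b q 0 k = (if k = 0 then 1 else 0))
       \<and> (\<forall>n::nat. n \<ge> 1 \<longrightarrow> Afun a b q n 0 = Tfun a b q 0 * Afun a b q (n - 1) 1)
       \<and> (\<forall>n::nat. \<forall>k::int. n \<ge> 1 \<and> k \<ge> 1 \<longrightarrow>
            Afun a b q n k = Afun a b q (n - 1) (k - 1) + Tfun a b q (nat k) * Afun a b q (n - 1) (k + 1))"
  using claim1 claim2[OF nza nzq] claim3[OF nza nzq] by blast

end
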